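(* Let $(\mathfrak{g},[\cdot,\cdot]_{\mathfrak{g}},\phi_{\mathfrak{g}})$ be a finite-dimensional weakly involutive Hom-Lie algebra and $r\in\mathfrak g\otimes\mathfrak g$ with $\phi_{\mathfrak g}r^\sharp=r^\sharp\phi_{\mathfrak g}^*$. Let $[\cdot,\cdot]_{\mathfrak g^*}$ be defined by $\langle[a,b]_{\mathfrak g^*},x\rangle=\langle\Delta(x),a\otimes b\rangle$ where $\Delta(x)=(\mathrm{ad}_x\otimes\phi_{\mathfrak g}+\phi_{\mathfrak g}\otimes\mathrm{ad}_x)r$. Then for all $a,b\in\mathfrak g^*$, $[r^\sharp\phi_{\mathfrak g}^*(a),r^\sharp\phi_{\mathfrak g}^*(b)]_{\mathfrak g}-r^\sharp\phi_{\mathfrak g}^*[a,b]_{\mathfrak g^*}=[r,r]_{\mathfrak g}(a,b)$.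
   Context: A Hom-Lie algebra $(\mathfrak{g},[\cdot,\cdot]_{\mathfrak{g}},\phi_{\mathfrak{g}})$: skew-symmetric bilinear bracket and linear map with $\phi_{\mathfrak g}[x,y]=[\phi_{\mathfrak g}x,\phi_{\mathfrak g}y]$ and $[\phi_{\mathfrak g}(x),[y,z]]+[\phi_{\mathfrak g}(y),[z,x]]+[\phi_{\mathfrak g}(z),[x,y]]=0$; weakly involutive if $[\phi_{\mathfrak g}^2(x),y]=[x,y]$. $\mathrm{ad}_xy=[x,y]_{\mathfrak g}$. $r^\sharp:\mathfrak g^*\to\mathfrak g$, $\langle r^\sharp(a),b\rangle=\langle r,a\otimes b\rangle$. For $r=\sum_ix_i\otimes y_i$, $[r,r]_{\mathfrak g}=\sum_{i,j}\big([x_i,x_j]_{\mathfrak g}\otimes\phi_{\mathfrak g}(y_i)\otimes\phi_{\mathfrak g}(y_j)+\phi_{\mathfrak g}(x_i)\otimes[y_i,x_j]_{\mathfrak g}\otimes\phi_{\mathfrak g}(y_j)+\phi_{\mathfrak g}(x_i)\otimes\phi_{\mathfrak g}(x_j)\otimes[y_i,y_j]_{\mathfrak g}\big)\in\mathfrak g^{\otimes3}$, and $[r,r]_{\mathfrak g}(a,b)\in\mathfrak g$ is the element with $\langle[r,r]_{\mathfrak g}(a,b),c\rangle=\langle[r,r]_{\mathfrak g},a\otimes b\otimes c\rangle$ for all $c\in\mathfrak g^*$. *)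

theory Defs
  imports Main "HOL-Library.Function_Algebras"
begin

text \<open>A finite-dimensional vector space g over a field 'k is modelled as 'k^n,
  i.e. functions 'n => 'k for a finite index type 'n (coordinates w.r.t. a basis).
  The dual g* is modelled likewise by 'n => 'k with the pairing below.
  A tensor r in g (x) g is given as a finite list of pairs (x_i, y_i),
  r = sum_i x_i (x) y_i (every tensor has this form).\<close>

definition vsmult :: "'k::field \<Rightarrow> ('n \<Rightarrow> 'k) \<Rightarrow> ('n \<Rightarrow> 'k)" where
  "vsmult c x = (\<lambda>i. c * x i)"

definition pair :: "('n::finite \<Rightarrow> 'k::field) \<Rightarrow> ('n \<Rightarrow> 'k) \<Rightarrow> 'k" where
  "pair a x = (\<Sum>i\<in>UNIV. a i * x i)"

definition bvec :: "'n \<Rightarrow> ('n \<Rightarrow> 'k::field)" where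
  "bvec j = (\<lambda>i. if i = j then 1 else 0)"

definition lin_map :: "(('n \<Rightarrow> 'k::field) \<Rightarrow> ('n \<Rightarrow> 'k)) \<Rightarrow> bool" where
  "lin_map f \<longleftrightarrow> (\<forall>x y. f (x + y) = f x + f y) \<and> (\<forall>c x. f (vsmult c x) = vsmult c (f x))"

definition bilin_map :: "(('n \<Rightarrow> 'k::field) \<Rightarrow> ('n \<Rightarrow> 'k) \<Rightarrow> ('n \<Rightarrow> 'k)) \<Rightarrow> bool" where
  "bilin_map B \<longleftrightarrow> (\<forall>x. lin_map (B x)) \<and> (\<forall>y. lin_map (\<lambda>x. B x y))"

definition hom_lie :: "(('n \<Rightarrow> 'k::field) \<Rightarrow> ('n \<Rightarrow> 'k) \<Rightarrow> ('n \<Rightarrow> 'k)) \<Rightarrow> (('n \<Rightarrow> 'k) \<Rightarrow> ('n \<Rightarrow> 'k)) \<Rightarrow> bool" where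
  "hom_lie br phi \<longleftrightarrow> bilin_map br \<and> lin_map phi
     \<and> (\<forall>x y. br x y = - br y x)
     \<and> (\<forall>x y. phi (br x y) = br (phi x) (phi y))
     \<and> (\<forall>x y z. br (phi x) (br y z) + br (phi y) (br z x) + br (phi z) (br x y) = 0)"

definition weakly_involutive :: "(('n \<Rightarrow> 'k::field) \<Rightarrow> ('n \<Rightarrow> 'k) \<Rightarrow> ('n \<Rightarrow> 'k)) \<Rightarrow> (('n \<Rightarrow> 'k) \<Rightarrow> ('n \<Rightarrow> 'k)) \<Rightarrow> bool" where
  "weakly_involutive br phi \<longleftrightarrow> (\<forall>x y. br (phi (phi x)) y = br x y)"

text \<open>Dual map phi*: <phi* a, x> = <a, phi x>.\<close>
definition dual_map :: "(('n::finite \<Rightarrow> 'k::field) \<Rightarrow> ('n \<Rightarrow> 'k)) \<Rightarrow> ('n \<Rightarrow> 'k) \<Rightarrow> ('n \<Rightarrow> 'k)" where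
  "dual_map phi a = (\<lambda>j. pair a (phi (bvec j)))"

text \<open>r-sharp: <r#(a), b> = <r, a (x) b>, so r#(a) = sum_i <a,x_i> y_i.\<close>
definition rsharp :: "(('n::finite \<Rightarrow> 'k::field) \<times> ('n \<Rightarrow> 'k)) list \<Rightarrow> ('n \<Rightarrow> 'k) \<Rightarrow> ('n \<Rightarrow> 'k)" where
  "rsharp r a = (\<Sum>(x,y)\<leftarrow>r. vsmult (pair a x) y)"

text \<open><[a,b]_{g*}, x> = <Delta(x), a (x) b>, Delta(x) = (ad_x (x) phi + phi (x) ad_x) r.\<close>
definition dual_bracket :: "(('n::finite \<Rightarrow> 'k::field) \<Rightarrow> ('n \<Rightarrow> 'k) \<Rightarrow> ('n \<Rightarrow> 'k)) \<Rightarrow> (('n \<Rightarrow> 'k) \<Rightarrow> ('n \<Rightarrow> 'k))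
     \<Rightarrow> (('n \<Rightarrow> 'k) \<times> ('n \<Rightarrow> 'k)) list \<Rightarrow> ('n \<Rightarrow> 'k) \<Rightarrow> ('n \<Rightarrow> 'k) \<Rightarrow> ('n \<Rightarrow> 'k)" where
  "dual_bracket br phi r a b = (\<lambda>j. let x = bvec j in
     (\<Sum>(xi,yi)\<leftarrow>r. pair a (br x xi) * pair b (phi yi) + pair a (phi xi) * pair b (br x yi)))"

text \<open>[r,r](a,b) in g: <[r,r](a,b), c> = <[r,r], a (x) b (x) c>.\<close>
definition rr_bracket :: "(('n::finite \<Rightarrow> 'k::field) \<Rightarrow> ('n \<Rightarrow> 'k) \<Rightarrow> ('n \<Rightarrow> 'k)) \<Rightarrow> (('n \<Rightarrow> 'k) \<Rightarrow> ('n \<Rightarrow> 'k))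
     \<Rightarrow> (('n \<Rightarrow> 'k) \<times> ('n \<Rightarrow> 'k)) list \<Rightarrow> ('n \<Rightarrow> 'k) \<Rightarrow> ('n \<Rightarrow> 'k) \<Rightarrow> ('n \<Rightarrow> 'k)" where
  "rr_bracket br phi r a b =
     (\<Sum>(xi,yi)\<leftarrow>r. \<Sum>(xj,yj)\<leftarrow>r.
        vsmult (pair a (br xi xj) * pair b (phi yi)) (phi yj)
      + vsmult (pair a (phi xi) * pair b (br yi xj)) (phi yj)
      + vsmult (pair a (phi xi) * pair b (phi xj)) (br yi yj))"

end

theory Submission
  imports Defs
begin

lemma sum_app: "(\<Sum>i\<in>I. f i) k = (\<Sum>i\<in>I. f i k)"
  by (induction I rule: infinite_finite_induct) auto

lemma lin_add: "lin_map f \<Longrightarrow> f (x + y) = f x + f y" by (simp add: lin_map_def)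
lemma lin_smult: "lin_map f \<Longrightarrow> f (vsmult c x) = vsmult c (f x)" by (simp add: lin_map_def)
lemma vsmult_0: "vsmult 0 x = 0" by (simp add: vsmult_def fun_eq_iff)
lemma lin_zero: "lin_map f \<Longrightarrow> f 0 = 0"
  using lin_smult[of f 0 0] by (simp add: vsmult_0)
lemma lin_sum: "lin_map f \<Longrightarrow> f (\<Sum>i\<in>I. g i) = (\<Sum>i\<in>I. f (g i))"
  by (induction I rule: infinite_finite_induct) (auto simp: lin_zero lin_add)

lemma vec_expand: "(x::'n::finite \<Rightarrow> 'k::field) = (\<Sum>j\<in>UNIV. vsmult (x j) (bvec j))"
  by (simp add: fun_eq_iff sum_app vsmult_def bvec_def if_distrib[where f="(*) _"] cong: if_cong)

lemma lin_expand: "lin_map f \<Longrightarrow> f (x::'n::finite \<Rightarrow> 'k::field) = (\<Sum>j\<in>UNIV. vsmult (x j) (f (bvec j)))"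
  by (subst vec_expand) (simp add: lin_sum lin_smult)

lemma pair_sum: "pair a (\<Sum>i\<in>I. g i) = (\<Sum>i\<in>I. pair a (g i))"
  by (simp add: pair_def sum_app sum_distrib_left) (rule sum.swap)
lemma pair_sum1: "pair (\<Sum>i\<in>I. g i) x = (\<Sum>i\<in>I. pair (g i) x)"
  by (simp add: pair_def sum_app sum_distrib_right) (rule sum.swap)
lemma pair_smult: "pair a (vsmult c x) = c * pair a x"
  by (simp add: pair_def vsmult_def sum_distrib_left mult_ac)
lemma pair_neg: "pair a (- x) = - pair a x"
  by (simp add: pair_def sum_negf)

lemma pair_fun: "lin_map f \<Longrightarrow> pair (\<lambda>k. pair a (f (bvec k))) x = pair a (f x)"
proof -
  assume l: "lin_map f"
  have "pair a (f x) = pair a (\<Sum>j\<in>UNIV. vsmult (x j) (f (bvec j)))"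
    using lin_expand[OF l] by metis
  also have "\<dots> = (\<Sum>j\<in>UNIV. x j * pair a (f (bvec j)))"
    by (simp add: pair_sum pair_smult)
  moreover have "pair (\<lambda>k. pair a (f (bvec k))) x = (\<Sum>j\<in>UNIV. x j * pair a (f (bvec j)))"
    unfolding pair_def[of "\<lambda>k. pair a (f (bvec k))"] by (simp add: mult.commute)
  ultimately show ?thesis by simp
qed

lemma pair_dual: "lin_map phi \<Longrightarrow> pair (dual_map phi a) x = pair a (phi x)"
  unfolding dual_map_def by (rule pair_fun)

lemma sumlist_nth: "sum_list (map (case_prod g) r) = (\<Sum>i<length r. g (fst (r!i)) (snd (r!i)))"
  by (simp add: sum_list_sum_nth atLeast0LessThan case_prod_beta)

lemma lin_vsmult: "lin_map (vsmult c)"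
  by (simp add: lin_map_def vsmult_def fun_eq_iff algebra_simps)
lemma vsmult_vsmult: "vsmult c (vsmult d x) = vsmult (c * d) x"
  by (simp add: vsmult_def mult_ac)
lemma vsmult_neg: "vsmult (- c) x = - vsmult c x"
  by (simp add: vsmult_def fun_eq_iff)

lemma pair_fun': "lin_map f \<Longrightarrow> (\<Sum>k\<in>UNIV. pair a (f (bvec k)) * z k) = pair a (f z)"
  using pair_fun[of f a z] by (simp add: pair_def[of "\<lambda>k. pair a (f (bvec k))"])

lemma scalar_id:
  fixes pa pb qb Yk PYk :: "nat \<Rightarrow> 'k::comm_ring" and R P S Q BB :: "nat \<Rightarrow> nat \<Rightarrow> 'k"
  assumes CA: "\<And>i. (\<Sum>j\<in>I. R i j * PYk j) = - (\<Sum>j\<in>I. P j i * Yk j)"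
    and CB: "\<And>i. (\<Sum>j\<in>I. S i j * PYk j) = - (\<Sum>j\<in>I. Q j i * Yk j)"
  shows "(\<Sum>i\<in>I. \<Sum>j\<in>I. pa i * pb j * BB i j) - (\<Sum>j\<in>I. (\<Sum>i\<in>I. P j i * qb i + pa i * Q j i) * Yk j)
    = (\<Sum>i\<in>I. \<Sum>j\<in>I. R i j * qb i * PYk j + pa i * S i j * PYk j + pa i * pb j * BB i j)"
proof -
  have "(\<Sum>i\<in>I. \<Sum>j\<in>I. R i j * qb i * PYk j + pa i * S i j * PYk j + pa i * pb j * BB i j)
     = (\<Sum>i\<in>I. qb i * (\<Sum>j\<in>I. R i j * PYk j) + pa i * (\<Sum>j\<in>I. S i j * PYk j) + (\<Sum>j\<in>I. pa i * pb j * BB i j))"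
    by (simp add: sum.distrib sum_distrib_left mult_ac)
  also have "\<dots> = (\<Sum>i\<in>I. - (qb i * (\<Sum>j\<in>I. P j i * Yk j)) - pa i * (\<Sum>j\<in>I. Q j i * Yk j) + (\<Sum>j\<in>I. pa i * pb j * BB i j))"
    by (simp add: CA CB)
  also have "\<dots> = (\<Sum>i\<in>I. \<Sum>j\<in>I. pa i * pb j * BB i j) - (\<Sum>i\<in>I. \<Sum>j\<in>I. P j i * qb i * Yk j + pa i * Q j i * Yk j)"
    by (simp add: sum.distrib sum_subtractf sum_negf sum_distrib_left mult_ac)
  also have "(\<Sum>i\<in>I. \<Sum>j\<in>I. P j i * qb i * Yk j + pa i * Q j i * Yk j) = (\<Sum>j\<in>I. (\<Sum>i\<in>I. P j i * qb i + pa i * Q j i) * Yk j)"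
  proof -
    have "(\<Sum>j\<in>I. (\<Sum>i\<in>I. P j i * qb i + pa i * Q j i) * Yk j) = (\<Sum>j\<in>I. \<Sum>i\<in>I. P j i * qb i * Yk j + pa i * Q j i * Yk j)"
      by (simp add: sum_distrib_right distrib_right)
    then show ?thesis using sum.swap[of "\<lambda>i j. P j i * qb i * Yk j + pa i * Q j i * Yk j" I I] by simp
  qed
  finally show ?thesis by simp
qed

theorem lemma4p9:
  fixes br :: "('n::finite \<Rightarrow> 'k::field) \<Rightarrow> ('n \<Rightarrow> 'k) \<Rightarrow> ('n \<Rightarrow> 'k)"
    and phi :: "('n \<Rightarrow> 'k) \<Rightarrow> ('n \<Rightarrow> 'k)"
    and r :: "(('n \<Rightarrow> 'k) \<times> ('n \<Rightarrow> 'k)) list"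
  assumes "hom_lie br phi"
    and "weakly_involutive br phi"
    and "\<And>a. phi (rsharp r a) = rsharp r (dual_map phi a)"
  shows "\<forall>a b. br (rsharp r (dual_map phi a)) (rsharp r (dual_map phi b))
              - rsharp r (dual_map phi (dual_bracket br phi r a b))
            = rr_bracket br phi r a b"
proof (intro allI)
  fix a b
  define I where "I = {..<length r}"
  define X where "X i = fst (r!i)" for i
  define Y where "Y i = snd (r!i)" for i
  have linphi: "lin_map phi" and linL: "\<And>y. lin_map (\<lambda>x. br x y)" and linR: "\<And>x. lin_map (br x)"
    and skew: "\<And>x y. br x y = - br y x"
    using assms(1) unfolding hom_lie_def bilin_map_def by blast+
  have rs: "rsharp r c = (\<Sum>i\<in>I. vsmult (pair c (X i)) (Y i))" for c
    by (simp add: rsharp_def sumlist_nth I_def X_def Y_def)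
  have L1: "br (rsharp r (dual_map phi a)) (rsharp r (dual_map phi b))
     = (\<Sum>i\<in>I. \<Sum>j\<in>I. vsmult (pair a (phi (X i)) * pair b (phi (X j))) (br (Y i) (Y j)))"
    by (simp add: rs pair_dual[OF linphi] lin_sum[OF linL] lin_sum[OF linR] lin_smult[OF linR]
        lin_smult[OF linL] vsmult_vsmult lin_sum[OF lin_vsmult])
      (subst sum.swap, simp add: mult.commute)
  have L2: "pair (dual_bracket br phi r a b) z = (\<Sum>i\<in>I. pair a (br z (X i)) * pair b (phi (Y i))
       + pair a (phi (X i)) * pair b (br z (Y i)))" for z
  proof -
    have "pair (dual_bracket br phi r a b) z = (\<Sum>k\<in>UNIV. (\<Sum>i\<in>I. pair a (br (bvec k) (X i)) * pair b (phi (Y i))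
       + pair a (phi (X i)) * pair b (br (bvec k) (Y i))) * z k)"
      unfolding pair_def[of "dual_bracket br phi r a b"]
      by (simp add: dual_bracket_def Let_def sumlist_nth I_def X_def Y_def)
    also have "\<dots> = (\<Sum>i\<in>I. (\<Sum>k\<in>UNIV. pair a (br (bvec k) (X i)) * z k) * pair b (phi (Y i))
       + pair a (phi (X i)) * (\<Sum>k\<in>UNIV. pair b (br (bvec k) (Y i)) * z k))"
      by (simp add: sum_distrib_left sum_distrib_right sum.distrib algebra_simps) (simp only: sum.swap[of _ UNIV I])
    finally show ?thesis by (simp add: pair_fun'[OF linL])
  qed
  have C1: "(\<Sum>j\<in>I. vsmult (pair c (br u (X j))) (phi (Y j)))
      = - (\<Sum>j\<in>I. vsmult (pair c (br (phi (X j)) u)) (Y j))" for c u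
  proof -
    define d where "d = (\<lambda>k. pair c (br u (bvec k)))"
    have pd: "pair d v = pair c (br u v)" for v
      unfolding d_def by (rule pair_fun[OF linR])
    have cond: "phi (rsharp r d) = rsharp r (dual_map phi d)" by (rule assms(3))
    have sk: "br u (phi x) = - br (phi x) u" for x by (rule skew)
    from cond show ?thesis
      by (simp add: rs lin_sum[OF linphi] lin_smult[OF linphi] pair_dual[OF linphi] pd
          sk pair_neg vsmult_neg sum_negf)
  qed
  show "br (rsharp r (dual_map phi a)) (rsharp r (dual_map phi b))
              - rsharp r (dual_map phi (dual_bracket br phi r a b))
            = rr_bracket br phi r a b"
  proof -
    have RR: "rr_bracket br phi r a b = (\<Sum>i\<in>I. \<Sum>j\<in>I.
        vsmult (pair a (br (X i) (X j)) * pair b (phi (Y i))) (phi (Y j))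
      + vsmult (pair a (phi (X i)) * pair b (br (Y i) (X j))) (phi (Y j))
      + vsmult (pair a (phi (X i)) * pair b (phi (X j))) (br (Y i) (Y j)))"
      by (simp add: rr_bracket_def sumlist_nth I_def X_def Y_def)
    have RS: "rsharp r (dual_map phi (dual_bracket br phi r a b)) = (\<Sum>j\<in>I. vsmult
       (\<Sum>i\<in>I. pair a (br (phi (X j)) (X i)) * pair b (phi (Y i))
       + pair a (phi (X i)) * pair b (br (phi (X j)) (Y i))) (Y j))"
      by (simp add: rs pair_dual[OF linphi] L2)
    have CA: "(\<Sum>j\<in>I. pair a (br (X i) (X j)) * phi (Y j) k) = - (\<Sum>j\<in>I. pair a (br (phi (X j)) (X i)) * Y j k)" for i k
      using fun_cong[OF C1[of a "X i"], of k] by (simp add: sum_app vsmult_def)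
    have CB: "(\<Sum>j\<in>I. pair b (br (Y i) (X j)) * phi (Y j) k) = - (\<Sum>j\<in>I. pair b (br (phi (X j)) (Y i)) * Y j k)" for i k
      using fun_cong[OF C1[of b "Y i"], of k] by (simp add: sum_app vsmult_def)
    show ?thesis
    proof (rule ext)
      fix k
      show "(br (rsharp r (dual_map phi a)) (rsharp r (dual_map phi b))
              - rsharp r (dual_map phi (dual_bracket br phi r a b))) k = rr_bracket br phi r a b k"
        unfolding RR RS L1
        using scalar_id[where I=I and pa="\<lambda>i. pair a (phi (X i))" and pb="\<lambda>j. pair b (phi (X j))"
          and qb="\<lambda>i. pair b (phi (Y i))" and Yk="\<lambda>j. Y j k" and PYk="\<lambda>j. phi (Y j) k"
          and R="\<lambda>i j. pair a (br (X i) (X j))" and P="\<lambda>j i. pair a (br (phi (X j)) (X i))"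
          and S="\<lambda>i j. pair b (br (Y i) (X j))" and Q="\<lambda>j i. pair b (br (phi (X j)) (Y i))"
          and BB="\<lambda>i j. br (Y i) (Y j) k", OF CA CB]
        by (simp only: minus_apply sum_app plus_fun_apply vsmult_def)
    qed
  qed
qed
end
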